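(* In the persuasion setting of the context, if the channel capacity is zero, $C(Q)=0$, then for all positive integers $k,n$, $$U^*_S(\mu^n,Q^k)=V\Big(\mu,\tfrac{k}{n}C(Q)\Big)=u^*_S(\mu).$$
   Context: For a finite set $S$, $\Delta(S)$ denotes the set of probability distributions on $S$. Let $\Omega$ be a finite set of states with prior $\mu\in\Delta(\Omega)$, $A$ a finite set of actions, $u_S,u_R:\Omega\times A\to\mathbb{R}$ payoffs of sender and receiver. A channel $(X,Y,Q)$: finite sets $X,Y$ and $Q:X\to\Delta(Y)$. For positive integers $n,k$: a sender strategy is $\sigma:\Omega^n\to\Delta(X^k)$; $\omega^n$ drawn i.i.d. from $\mu$ ($\mu^n(\omega^n)=\prod_t\mu(\omega_t)$), $x^k$ with probability $\sigma(x^k|\omega^n)$, $y^k$ with probability $Q^k(y^k|x^k)=\prod_tQ(y_t|x_t)$, observed by the receiver; a receiver strategy is $\tau:Y^k\to A^n$. Payoffs $\bar u_i(\omega^n,a^n)=\frac1n\sum_tu_i(\omega_t,a_t)$. $BR(\sigma)$: strategies $\tau$ such that for each $y^k$, $\tau(y^k)$ maximizes $\sum_{\omega^n,x^k}\mu^n(\omega^n)\sigma(x^k|\omega^n)Q^k(y^k|x^k)\bar u_R(\omega^n,a^n)$ over $a^n$. $U^*_S(\mu^n,Q^k)=\sup_\sigma\min_{\tau\in BR(\sigma)}\sum_{\omega^n,x^k,y^k}\mu^n(\omega^n)\sigma(x^k|\omega^n)Q^k(y^k|x^k)\bar u_S(\omega^n,\tau(y^k))$. $A^*(\nu)=\arg\max_a\sum_\omega\nu(\omega)u_R(\omega,a)$,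 $u^*_S(\nu)=\min_{a\in A^*(\nu)}\sum_\omega\nu(\omega)u_S(\omega,a)$. $H(q)=-\sum_sq(s)\log_2q(s)$. Capacity $C(Q)=\max_{p\in\Delta(X)}\big[H(\sum_xp(x)Q(\cdot|x))-\sum_xp(x)H(Q(\cdot|x))\big]$. A splitting of $\mu$: finite family $(\lambda_m,\nu_m)_m$, $\nu_m\in\Delta(\Omega)$, $\lambda_m\ge0$, $\sum\lambda_m=1$, $\sum\lambda_m\nu_m=\mu$. $V(\mu,c)=\sup\{\sum_m\lambda_mu^*_S(\nu_m):\text{splitting of }\mu,\ H(\mu)-\sum_m\lambda_mH(\nu_m)\le c\}$. *)

theory Defs
  imports Complex_Main
begin

definition is_dist :: "('s::finite \<Rightarrow> real) \<Rightarrow> bool" where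
  "is_dist p \<longleftrightarrow> (\<forall>s. 0 \<le> p s) \<and> (\<Sum>s\<in>UNIV. p s) = 1"

definition is_dist_on :: "'s set \<Rightarrow> ('s \<Rightarrow> real) \<Rightarrow> bool" where
  "is_dist_on S p \<longleftrightarrow> (\<forall>s\<in>S. 0 \<le> p s) \<and> (\<Sum>s\<in>S. p s) = 1"

definition words :: "nat \<Rightarrow> 'a list set" where
  "words n = {xs. length xs = n}"

definition prod_prior :: "('w \<Rightarrow> real) \<Rightarrow> 'w list \<Rightarrow> real" where
  "prod_prior \<mu> ws = prod_list (map \<mu> ws)"

definition chan_pow :: "('x \<Rightarrow> 'y \<Rightarrow> real) \<Rightarrow> 'x list \<Rightarrow> 'y list \<Rightarrow> real" where
  "chan_pow Q xs ys = prod_list (map2 Q xs ys)"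

definition avg_payoff :: "('w \<Rightarrow> 'a \<Rightarrow> real) \<Rightarrow> 'w list \<Rightarrow> 'a list \<Rightarrow> real" where
  "avg_payoff u ws as = (1 / real (length ws)) * (\<Sum>t<length ws. u (ws ! t) (as ! t))"

definition sender_strats :: "nat \<Rightarrow> nat \<Rightarrow> ('w list \<Rightarrow> 'x list \<Rightarrow> real) set" where
  "sender_strats n k = {\<sigma>. \<forall>ws\<in>words n. is_dist_on (words k) (\<sigma> ws)}"

text \<open>receiver's (unnormalised) expected payoff of a^n after observing y^k\<close>
definition recv_val ::
  "('w::finite \<Rightarrow> real) \<Rightarrow> ('w \<Rightarrow> 'a \<Rightarrow> real) \<Rightarrow> ('x::finite \<Rightarrow> 'y \<Rightarrow> real) \<Rightarrow> nat \<Rightarrow> nat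
   \<Rightarrow> ('w list \<Rightarrow> 'x list \<Rightarrow> real) \<Rightarrow> 'y list \<Rightarrow> 'a list \<Rightarrow> real" where
  "recv_val \<mu> uR Q n k \<sigma> ys as =
     (\<Sum>ws\<in>words n. \<Sum>xs\<in>words k. prod_prior \<mu> ws * \<sigma> ws xs * chan_pow Q xs ys * avg_payoff uR ws as)"

definition BR ::
  "('w::finite \<Rightarrow> real) \<Rightarrow> ('w \<Rightarrow> 'a::finite \<Rightarrow> real) \<Rightarrow> ('x::finite \<Rightarrow> 'y::finite \<Rightarrow> real) \<Rightarrow> nat \<Rightarrow> nat
   \<Rightarrow> ('w list \<Rightarrow> 'x list \<Rightarrow> real) \<Rightarrow> ('y list \<Rightarrow> 'a list) set" where
  "BR \<mu> uR Q n k \<sigma> = {\<tau>. \<forall>ys\<in>words k. \<tau> ys \<in> words n \<and>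
       (\<forall>as\<in>words n. recv_val \<mu> uR Q n k \<sigma> ys as \<le> recv_val \<mu> uR Q n k \<sigma> ys (\<tau> ys))}"

definition sender_val ::
  "('w::finite \<Rightarrow> real) \<Rightarrow> ('w \<Rightarrow> 'a \<Rightarrow> real) \<Rightarrow> ('x::finite \<Rightarrow> 'y::finite \<Rightarrow> real) \<Rightarrow> nat \<Rightarrow> nat
   \<Rightarrow> ('w list \<Rightarrow> 'x list \<Rightarrow> real) \<Rightarrow> ('y list \<Rightarrow> 'a list) \<Rightarrow> real" where
  "sender_val \<mu> uS Q n k \<sigma> \<tau> =
     (\<Sum>ws\<in>words n. \<Sum>xs\<in>words k. \<Sum>ys\<in>words k.
        prod_prior \<mu> ws * \<sigma> ws xs * chan_pow Q xs ys * avg_payoff uS ws (\<tau> ys))"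

definition U_star ::
  "('w::finite \<Rightarrow> real) \<Rightarrow> ('w \<Rightarrow> 'a::finite \<Rightarrow> real) \<Rightarrow> ('w \<Rightarrow> 'a \<Rightarrow> real)
   \<Rightarrow> ('x::finite \<Rightarrow> 'y::finite \<Rightarrow> real) \<Rightarrow> nat \<Rightarrow> nat \<Rightarrow> real" where
  "U_star \<mu> uS uR Q n k =
     (SUP \<sigma>\<in>sender_strats n k. INF \<tau>\<in>BR \<mu> uR Q n k \<sigma>. sender_val \<mu> uS Q n k \<sigma> \<tau>)"

definition A_star :: "('w::finite \<Rightarrow> 'a \<Rightarrow> real) \<Rightarrow> ('w \<Rightarrow> real) \<Rightarrow> 'a set" where
  "A_star uR \<nu> = {a. \<forall>b. (\<Sum>\<omega>\<in>UNIV. \<nu> \<omega> * uR \<omega> b) \<le> (\<Sum>\<omega>\<in>UNIV. \<nu> \<omega> * uR \<omega> a)}"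

definition u_star_S ::
  "('w::finite \<Rightarrow> 'a::finite \<Rightarrow> real) \<Rightarrow> ('w \<Rightarrow> 'a \<Rightarrow> real) \<Rightarrow> ('w \<Rightarrow> real) \<Rightarrow> real" where
  "u_star_S uS uR \<nu> = Min ((\<lambda>a. \<Sum>\<omega>\<in>UNIV. \<nu> \<omega> * uS \<omega> a) ` A_star uR \<nu>)"

text \<open>Shannon entropy in bits (with 0 log 0 = 0).\<close>
definition entropy :: "('s::finite \<Rightarrow> real) \<Rightarrow> real" where
  "entropy q = - (\<Sum>s\<in>UNIV. q s * log 2 (q s))"

definition capacity :: "('x::finite \<Rightarrow> 'y::finite \<Rightarrow> real) \<Rightarrow> real" where
  "capacity Q = (SUP p\<in>{p. is_dist p}.
      entropy (\<lambda>y. \<Sum>x\<in>UNIV. p x * Q x y) - (\<Sum>x\<in>UNIV. p x * entropy (Q x)))"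

definition is_splitting :: "('w::finite \<Rightarrow> real) \<Rightarrow> (real \<times> ('w \<Rightarrow> real)) list \<Rightarrow> bool" where
  "is_splitting \<mu> ps \<longleftrightarrow>
     (\<forall>(l, \<nu>)\<in>set ps. 0 \<le> l \<and> is_dist \<nu>) \<and>
     sum_list (map fst ps) = 1 \<and>
     (\<forall>\<omega>. sum_list (map (\<lambda>(l, \<nu>). l * \<nu> \<omega>) ps) = \<mu> \<omega>)"

definition V ::
  "('w::finite \<Rightarrow> 'a::finite \<Rightarrow> real) \<Rightarrow> ('w \<Rightarrow> 'a \<Rightarrow> real) \<Rightarrow> ('w \<Rightarrow> real) \<Rightarrow> real \<Rightarrow> real" where
  "V uS uR \<mu> c = Sup {sum_list (map (\<lambda>(l, \<nu>). l * u_star_S uS uR \<nu>) ps) | ps.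
      is_splitting \<mu> ps \<and> entropy \<mu> - sum_list (map (\<lambda>(l, \<nu>). l * entropy \<nu>) ps) \<le> c}"

end

theory Submission
  imports Defs
begin


lemma pw_ineq:
  fixes a b :: real
  assumes "0 \<le> a" "0 \<le> b" "0 < a \<Longrightarrow> 0 < b"
  shows "a * ln b - a * ln a \<le> b - a" and "a \<noteq> b \<Longrightarrow> a * ln b - a * ln a < b - a"
proof -
  have "a * ln b - a * ln a \<le> b - a \<and> (a \<noteq> b \<longrightarrow> a * ln b - a * ln a < b - a)"
  proof (cases "a = 0")
    case True then show ?thesis using assms by auto
  next
    case False
    then have a: "0 < a" using assms by auto
    then have b: "0 < b" using assms by auto
    have e: "a * ln b - a * ln a = a * ln (b / a)" using a b by (simp add: ln_div right_diff_distrib)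
    have le: "ln (b/a) \<le> b/a - 1" using a b by (intro ln_le_minus_one) auto
    have "a * ln (b/a) \<le> a * (b/a - 1)" using le a by (intro mult_left_mono) auto
    also have "\<dots> = b - a" using a by (simp add: field_simps)
    finally have 1: "a * ln b - a * ln a \<le> b - a" using e by simp
    have 2: "a * ln b - a * ln a < b - a" if "a \<noteq> b"
    proof -
      have "ln (b/a) \<noteq> b/a - 1"
      proof
        assume "ln (b/a) = b/a - 1"
        then have "b/a = 1" by (rule ln_eq_minus_one[rotated]) (use a b in auto)
        then show False using that a by auto
      qed
      then have "ln (b/a) < b/a - 1" using le by auto
      then have "a * ln (b/a) < a * (b/a - 1)" using a by (intro mult_strict_left_mono) auto
      also have "\<dots> = b - a" using a by (simp add: field_simps)
      finally show ?thesis using e by simp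
    qed
    show ?thesis using 1 2 by auto
  qed
  then show "a * ln b - a * ln a \<le> b - a" and "a \<noteq> b \<Longrightarrow> a * ln b - a * ln a < b - a" by auto
qed

lemma entropy_ln: "entropy q = - (\<Sum>s\<in>UNIV. q s * ln (q s)) / ln 2"
  unfolding entropy_def log_def by (simp add: sum_divide_distrib)

lemma mix_entropy:
  fixes l :: "'i \<Rightarrow> real" and \<nu> :: "'i \<Rightarrow> 's::finite \<Rightarrow> real" and \<mu> :: "'s \<Rightarrow> real"
  assumes fin: "finite I" and l0: "\<forall>i\<in>I. 0 \<le> l i" and nu0: "\<forall>i\<in>I. \<forall>s. 0 \<le> \<nu> i s"
    and l1: "sum l I = 1" and mu: "\<And>s. \<mu> s = (\<Sum>i\<in>I. l i * \<nu> i s)"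
  shows "(\<Sum>i\<in>I. l i * entropy (\<nu> i)) \<le> entropy \<mu>"
    and "(\<Sum>i\<in>I. l i * entropy (\<nu> i)) = entropy \<mu> \<Longrightarrow> \<forall>i\<in>I. 0 < l i \<longrightarrow> \<nu> i = \<mu>"
proof -
  define D where "D i s = (\<mu> s - \<nu> i s) - (\<nu> i s * ln (\<mu> s) - \<nu> i s * ln (\<nu> i s))" for i s
  have mu0: "0 \<le> \<mu> s" for s unfolding mu using l0 nu0 by (auto intro!: sum_nonneg)
  have pos: "0 < \<mu> s" if "i \<in> I" "0 < l i" "0 < \<nu> i s" for i s
  proof -
    have "l i * \<nu> i s \<le> (\<Sum>j\<in>I. l j * \<nu> j s)"
      using fin that l0 nu0 by (intro member_le_sum) auto
    moreover have "0 < l i * \<nu> i s" using that by simp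
    ultimately show ?thesis unfolding mu by linarith
  qed
  have D0: "0 \<le> l i * D i s" if "i \<in> I" for i s
  proof (cases "l i = 0")
    case False
    then have "0 < l i" using l0 that by force
    then have "0 \<le> D i s" unfolding D_def using pw_ineq(1)[of "\<nu> i s" "\<mu> s"] nu0 mu0 pos that by force
    then show ?thesis using l0 that by simp
  qed simp
  have Dsum: "(\<Sum>i\<in>I. l i * D i s) = (\<Sum>i\<in>I. l i * (\<nu> i s * ln (\<nu> i s))) - \<mu> s * ln (\<mu> s)" for s
  proof -
    have "(\<Sum>i\<in>I. l i * D i s) = (\<Sum>i\<in>I. l i) * \<mu> s - (\<Sum>i\<in>I. l i * \<nu> i s)
        - (\<Sum>i\<in>I. l i * \<nu> i s) * ln (\<mu> s) + (\<Sum>i\<in>I. l i * (\<nu> i s * ln (\<nu> i s)))"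
      unfolding D_def by (simp add: sum_distrib_right sum_distrib_left sum_subtractf sum.distrib algebra_simps)
    then show ?thesis using l1 mu[of s] by simp
  qed
  have diff: "entropy \<mu> - (\<Sum>i\<in>I. l i * entropy (\<nu> i)) = (\<Sum>s\<in>UNIV. \<Sum>i\<in>I. l i * D i s) / ln 2"
  proof -
    have "(\<Sum>i\<in>I. l i * entropy (\<nu> i)) = - (\<Sum>s\<in>UNIV. \<Sum>i\<in>I. l i * (\<nu> i s * ln (\<nu> i s))) / ln 2"
      unfolding entropy_ln by (simp add: sum_distrib_left sum_divide_distrib sum.swap[of _ I] sum_negf algebra_simps)
    then show ?thesis unfolding entropy_ln Dsum
      by (simp add: sum_subtractf diff_divide_distrib)
  qed
  have S0: "0 \<le> (\<Sum>s\<in>UNIV. \<Sum>i\<in>I. l i * D i s)" using D0 by (intro sum_nonneg) auto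
  show "(\<Sum>i\<in>I. l i * entropy (\<nu> i)) \<le> entropy \<mu>"
  proof -
    have "0 \<le> (\<Sum>s\<in>UNIV. \<Sum>i\<in>I. l i * D i s) / ln 2" using S0 by simp
    then show ?thesis using diff by linarith
  qed
  assume eq: "(\<Sum>i\<in>I. l i * entropy (\<nu> i)) = entropy \<mu>"
  then have "(\<Sum>s\<in>UNIV. \<Sum>i\<in>I. l i * D i s) = 0" using diff by simp
  moreover have "\<forall>s\<in>UNIV. 0 \<le> (\<Sum>i\<in>I. l i * D i s)" using D0 by (auto intro!: sum_nonneg)
  ultimately have Z1: "\<forall>s\<in>UNIV. (\<Sum>i\<in>I. l i * D i s) = 0"
    using sum_nonneg_eq_0_iff[OF finite_UNIV, of "\<lambda>s. \<Sum>i\<in>I. l i * D i s"] by blast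
  have Z: "l i * D i s = 0" if "i \<in> I" for i s
  proof -
    have "(\<Sum>i\<in>I. l i * D i s) = 0" using Z1 by simp
    then show ?thesis using sum_nonneg_eq_0_iff[OF fin, of "\<lambda>i. l i * D i s"] D0 that by blast
  qed
  show "\<forall>i\<in>I. 0 < l i \<longrightarrow> \<nu> i = \<mu>"
  proof (intro ballI impI ext)
    fix i s assume i: "i \<in> I" "0 < l i"
    then have "D i s = 0" using Z[of i s] by simp
    then show "\<nu> i s = \<mu> s" unfolding D_def using pw_ineq(2)[of "\<nu> i s" "\<mu> s"] nu0 mu0 pos i by force
  qed
qed



lemma ent_nonneg:
  assumes "is_dist q" shows "0 \<le> entropy q"
proof -
  have "q s * ln (q s) \<le> 0" for s
  proof -
    have q0: "0 \<le> q s" using assms unfolding is_dist_def by auto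
    have "q s \<le> (\<Sum>s\<in>UNIV. q s)" using assms unfolding is_dist_def by (intro member_le_sum) auto
    then have "q s \<le> 1" using assms unfolding is_dist_def by simp
    then have "ln (q s) \<le> 0" using q0 by (cases "q s = 0") auto
    then show ?thesis using q0 by (simp add: mult_nonneg_nonpos)
  qed
  then have "(\<Sum>s\<in>UNIV. q s * ln (q s)) \<le> 0" by (intro sum_nonpos) auto
  then show ?thesis unfolding entropy_ln by (simp add: divide_nonpos_pos)
qed

lemma ent_upper:
  fixes q :: "'s::finite \<Rightarrow> real"
  assumes "\<forall>s. 0 \<le> q s" shows "entropy q \<le> real (card (UNIV :: 's set)) / ln 2"
proof -
  have "- (q s * ln (q s)) \<le> 1" for s
  proof (cases "q s = 0")
    case False
    then have p: "0 < q s" using assms by (metis order_le_less)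
    have "ln (1 / q s) \<le> 1 / q s - 1" using p by (intro ln_le_minus_one) auto
    then have "- ln (q s) \<le> 1 / q s - 1" using p by (simp add: ln_div)
    then have "q s * (- ln (q s)) \<le> q s * (1 / q s - 1)" using p by (intro mult_left_mono) auto
    also have "\<dots> = 1 - q s" using p by (simp add: field_simps)
    finally show ?thesis using p by simp
  qed simp
  then have "(\<Sum>s\<in>UNIV. - (q s * ln (q s))) \<le> (\<Sum>s\<in>(UNIV::'s set). 1)" by (intro sum_mono) auto
  then have "- (\<Sum>s\<in>UNIV. q s * ln (q s)) \<le> real (card (UNIV :: 's set))" by (simp add: sum_negf)
  then show ?thesis unfolding entropy_ln by (intro divide_right_mono) auto
qed

lemma capacity_zero_const:
  fixes Q :: "'x::finite \<Rightarrow> 'y::finite \<Rightarrow> real"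
  assumes Qd: "\<forall>x. is_dist (Q x)" and c: "capacity Q = 0"
  shows "\<exists>q. is_dist q \<and> (\<forall>x. Q x = q)"
proof -
  define p :: "'x \<Rightarrow> real" where "p x = 1 / real (card (UNIV :: 'x set))" for x
  define mix where "mix y = (\<Sum>x\<in>UNIV. p x * Q x y)" for y
  define I where "I p = entropy (\<lambda>y. \<Sum>x\<in>UNIV. p x * Q x y) - (\<Sum>x\<in>UNIV. p x * entropy (Q x))" for p :: "'x \<Rightarrow> real"
  have pd: "is_dist p" unfolding is_dist_def p_def by simp
  have Q0: "\<forall>x\<in>UNIV. \<forall>s. 0 \<le> Q x s" using Qd unfolding is_dist_def by auto
  have bdd: "bdd_above (I ` {p. is_dist p})"
  proof (rule bdd_aboveI2)
    fix p' :: "'x \<Rightarrow> real" assume "p' \<in> {p. is_dist p}"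
    then have p'd: "is_dist p'" by simp
    have "0 \<le> (\<Sum>x\<in>UNIV. p' x * entropy (Q x))"
      using p'd Qd ent_nonneg by (auto intro!: sum_nonneg mult_nonneg_nonneg ent_nonneg simp: is_dist_def[of p'])
    moreover have "entropy (\<lambda>y. \<Sum>x\<in>UNIV. p' x * Q x y) \<le> real (card (UNIV :: 'y set)) / ln 2"
      using p'd Q0 unfolding is_dist_def by (intro ent_upper) (auto intro!: sum_nonneg)
    ultimately show "I p' \<le> real (card (UNIV :: 'y set)) / ln 2" unfolding I_def by linarith
  qed
  have "I p \<le> capacity Q" unfolding capacity_def I_def[symmetric]
    using pd bdd by (intro cSUP_upper) auto
  then have le: "entropy mix \<le> (\<Sum>x\<in>UNIV. p x * entropy (Q x))" using c unfolding I_def mix_def by simp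
  have m1: "(\<Sum>x\<in>UNIV. p x * entropy (Q x)) \<le> entropy mix"
    by (rule mix_entropy(1)[of UNIV p Q mix]) (use pd Q0 in \<open>auto simp: is_dist_def mix_def\<close>)
  have "\<forall>i\<in>UNIV. 0 < p i \<longrightarrow> Q i = mix"
    by (rule mix_entropy(2)[of UNIV p Q mix]) (use pd Q0 le m1 in \<open>auto simp: is_dist_def mix_def\<close>)
  then have "\<forall>x. Q x = mix" unfolding p_def by (simp add: finite_UNIV_card_ge_0)
  then show ?thesis using Qd by metis
qed

lemma sum_list_map_nth: "sum_list (map f xs) = (\<Sum>i<length xs. f (xs ! i))"
  by (simp add: sum_list_sum_nth atLeast0LessThan)

lemma V_zero:
  assumes md: "is_dist \<mu>"
  shows "V uS uR \<mu> 0 = u_star_S uS uR \<mu>"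
proof -
  let ?S = "{sum_list (map (\<lambda>(l, \<nu>). l * u_star_S uS uR \<nu>) ps) | ps.
      is_splitting \<mu> ps \<and> entropy \<mu> - sum_list (map (\<lambda>(l, \<nu>). l * entropy \<nu>) ps) \<le> 0}"
  have "?S = {u_star_S uS uR \<mu>}"
  proof (intro equalityI subsetI)
    fix v assume "v \<in> {u_star_S uS uR \<mu>}"
    then have v: "v = u_star_S uS uR \<mu>" by simp
    have "is_splitting \<mu> [(1, \<mu>)]" using md unfolding is_splitting_def by simp
    then show "v \<in> ?S" using v by (auto intro!: exI[of _ "[(1, \<mu>)]"])
  next
    fix v assume "v \<in> ?S"
    then obtain ps where v: "v = sum_list (map (\<lambda>(l, \<nu>). l * u_star_S uS uR \<nu>) ps)"
      and sp: "is_splitting \<mu> ps"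
      and ce: "entropy \<mu> - sum_list (map (\<lambda>(l, \<nu>). l * entropy \<nu>) ps) \<le> 0" by blast
    define l where "l i = fst (ps ! i)" for i
    define \<nu> where "\<nu> i = snd (ps ! i)" for i
    have mem: "i < length ps \<Longrightarrow> 0 \<le> l i \<and> is_dist (\<nu> i)" for i
      using sp nth_mem[of i ps] unfolding is_splitting_def l_def \<nu>_def by (auto simp: case_prod_beta)
    have l1: "sum l {..<length ps} = 1" using sp unfolding is_splitting_def l_def
      by (simp add: sum_list_map_nth)
    have mu: "\<mu> s = (\<Sum>i\<in>{..<length ps}. l i * \<nu> i s)" for s
      using sp unfolding is_splitting_def l_def \<nu>_def by (simp add: sum_list_map_nth case_prod_beta)
    have e: "sum_list (map (\<lambda>(l, \<nu>). l * entropy \<nu>) ps) = (\<Sum>i\<in>{..<length ps}. l i * entropy (\<nu> i))"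
      unfolding l_def \<nu>_def by (simp add: sum_list_map_nth case_prod_beta)
    have m1: "(\<Sum>i\<in>{..<length ps}. l i * entropy (\<nu> i)) \<le> entropy \<mu>"
      by (rule mix_entropy(1)) (use mem l1 mu in \<open>auto simp: is_dist_def\<close>)
    have eq: "\<forall>i\<in>{..<length ps}. 0 < l i \<longrightarrow> \<nu> i = \<mu>"
      by (rule mix_entropy(2)) (use mem l1 mu m1 ce e in \<open>auto simp: is_dist_def\<close>)
    have "v = (\<Sum>i\<in>{..<length ps}. l i * u_star_S uS uR (\<nu> i))"
      unfolding v l_def \<nu>_def by (simp add: sum_list_map_nth case_prod_beta)
    also have "\<dots> = (\<Sum>i\<in>{..<length ps}. l i * u_star_S uS uR \<mu>)"
    proof (rule sum.cong)
      fix i assume i: "i \<in> {..<length ps}"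
      show "l i * u_star_S uS uR (\<nu> i) = l i * u_star_S uS uR \<mu>"
      proof (cases "l i = 0")
        case False then have "0 < l i" using mem i by force
        then show ?thesis using eq i by simp
      qed simp
    qed simp
    also have "\<dots> = u_star_S uS uR \<mu>" using l1 by (simp add: sum_distrib_right[symmetric])
    finally show "v \<in> {u_star_S uS uR \<mu>}" by simp
  qed
  then show ?thesis unfolding V_def by simp
qed



lemma finite_words: "finite (words n :: ('a::finite) list set)"
proof -
  have "words n = {xs :: 'a list. set xs \<subseteq> UNIV \<and> length xs = n}" unfolding words_def by simp
  then show ?thesis using finite_lists_length_eq[OF finite_UNIV, of n] by simp
qed

lemma words_Suc_sum:
  fixes g :: "('a::finite) list \<Rightarrow> real"
  shows "(\<Sum>xs\<in>words (Suc n). g xs) = (\<Sum>w\<in>UNIV. \<Sum>ws\<in>words n. g (w # ws))"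
proof -
  have e: "words (Suc n) = (\<lambda>(w, ws). w # ws) ` (UNIV \<times> words n)"
    unfolding words_def by (auto simp: length_Suc_conv image_iff)
  have inj: "inj_on (\<lambda>(w, ws). w # ws) (UNIV \<times> words n)" by (auto simp: inj_on_def)
  have "(\<Sum>xs\<in>words (Suc n). g xs) = (\<Sum>p\<in>UNIV \<times> words n. g (fst p # snd p))"
    unfolding e by (subst sum.reindex[OF inj]) (simp add: case_prod_beta)
  also have "\<dots> = (\<Sum>w\<in>UNIV. \<Sum>ws\<in>words n. g (w # ws))"
    by (subst sum.cartesian_product) (simp add: case_prod_beta)
  finally show ?thesis .
qed

lemma words_0: "words 0 = {[]}" unfolding words_def by auto

lemma prod_sum1:
  fixes \<mu> :: "'w::finite \<Rightarrow> real"
  assumes "is_dist \<mu>" shows "(\<Sum>ws\<in>words n. prod_prior \<mu> ws) = 1"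
proof (induction n)
  case 0 then show ?case by (simp add: words_0 prod_prior_def)
next
  case (Suc n)
  have "(\<Sum>ws\<in>words (Suc n). prod_prior \<mu> ws) = (\<Sum>w\<in>UNIV. \<mu> w * (\<Sum>ws\<in>words n. prod_prior \<mu> ws))"
    unfolding words_Suc_sum by (simp add: prod_prior_def sum_distrib_left)
  also have "\<dots> = 1" using Suc assms by (simp add: is_dist_def)
  finally show ?case .
qed

lemma marginal:
  fixes \<mu> :: "'w::finite \<Rightarrow> real"
  assumes md: "is_dist \<mu>"
  shows "t < n \<Longrightarrow> (\<Sum>ws\<in>words n. prod_prior \<mu> ws * f (ws ! t)) = (\<Sum>\<omega>\<in>UNIV. \<mu> \<omega> * f \<omega>)"
proof (induction n arbitrary: t)
  case 0 then show ?case by simp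
next
  case (Suc n)
  show ?case
  proof (cases t)
    case 0
    have "(\<Sum>ws\<in>words (Suc n). prod_prior \<mu> ws * f (ws ! t))
        = (\<Sum>w\<in>UNIV. \<mu> w * f w * (\<Sum>ws\<in>words n. prod_prior \<mu> ws))"
      unfolding words_Suc_sum 0 by (simp add: prod_prior_def sum_distrib_left algebra_simps)
    then show ?thesis using prod_sum1[OF md] by simp
  next
    case (Suc t')
    then have t': "t' < n" using Suc.prems by simp
    have "(\<Sum>ws\<in>words (Suc n). prod_prior \<mu> ws * f (ws ! t))
        = (\<Sum>w\<in>UNIV. \<mu> w * (\<Sum>ws\<in>words n. prod_prior \<mu> ws * f (ws ! t')))"
      unfolding words_Suc_sum Suc by (simp add: prod_prior_def sum_distrib_left algebra_simps)
    also have "\<dots> = (\<Sum>w\<in>UNIV. \<mu> w) * (\<Sum>\<omega>\<in>UNIV. \<mu> \<omega> * f \<omega>)"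
      using Suc.IH[OF t'] by (simp add: sum_distrib_right)
    finally show ?thesis using md by (simp add: is_dist_def)
  qed
qed

lemma prod_prior_nonneg: "(\<forall>s. 0 \<le> q s) \<Longrightarrow> 0 \<le> prod_prior q ys"
  unfolding prod_prior_def by (induction ys) auto

definition eu :: "('w::finite \<Rightarrow> real) \<Rightarrow> ('w \<Rightarrow> 'a \<Rightarrow> real) \<Rightarrow> 'a \<Rightarrow> real" where
  "eu \<mu> u a = (\<Sum>\<omega>\<in>UNIV. \<mu> \<omega> * u \<omega> a)"

definition EE :: "('w::finite \<Rightarrow> real) \<Rightarrow> nat \<Rightarrow> ('w \<Rightarrow> 'a \<Rightarrow> real) \<Rightarrow> 'a list \<Rightarrow> real" where
  "EE \<mu> n u as = (\<Sum>ws\<in>words n. prod_prior \<mu> ws * avg_payoff u ws as)"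

lemma EE_decomp:
  assumes md: "is_dist \<mu>"
  shows "EE \<mu> n u as = (1 / real n) * (\<Sum>t<n. eu \<mu> u (as ! t))"
proof -
  have "EE \<mu> n u as = (\<Sum>ws\<in>words n. prod_prior \<mu> ws * ((1 / real n) * (\<Sum>t<n. u (ws ! t) (as ! t))))"
    unfolding EE_def avg_payoff_def by (intro sum.cong) (auto simp: words_def)
  also have "\<dots> = (1 / real n) * (\<Sum>t<n. \<Sum>ws\<in>words n. prod_prior \<mu> ws * u (ws ! t) (as ! t))"
    by (simp add: sum_distrib_left sum.swap[of _ "words n"] algebra_simps)
  also have "\<dots> = (1 / real n) * (\<Sum>t<n. eu \<mu> u (as ! t))"
    unfolding eu_def using marginal[OF md, of _ n "\<lambda>\<omega>. u \<omega> (_ ! _)"]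
    by (intro arg_cong[where f="\<lambda>x. (1 / real n) * x"] sum.cong) auto
  finally show ?thesis .
qed

lemma chan_const: "length xs = length ys \<Longrightarrow> chan_pow (\<lambda>_. q) xs ys = prod_prior q ys"
  unfolding chan_pow_def prod_prior_def
  by (induction xs ys rule: list_induct2) auto

lemma recv_eq:
  assumes s: "\<sigma> \<in> sender_strats n k" and ys: "ys \<in> words k"
  shows "recv_val \<mu> uR (\<lambda>_. q) n k \<sigma> ys as = prod_prior q ys * EE \<mu> n uR as"
proof -
  have "recv_val \<mu> uR (\<lambda>_. q) n k \<sigma> ys as
     = (\<Sum>ws\<in>words n. prod_prior \<mu> ws * prod_prior q ys * avg_payoff uR ws as * (\<Sum>xs\<in>words k. \<sigma> ws xs))"
    unfolding recv_val_def sum_distrib_left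
    by (intro sum.cong refl) (use ys in \<open>auto simp: chan_const words_def algebra_simps\<close>)
  also have "\<dots> = (\<Sum>ws\<in>words n. prod_prior q ys * (prod_prior \<mu> ws * avg_payoff uR ws as))"
    using s unfolding sender_strats_def is_dist_on_def by (intro sum.cong refl) auto
  also have "\<dots> = prod_prior q ys * EE \<mu> n uR as" unfolding EE_def by (simp add: sum_distrib_left)
  finally show ?thesis .
qed

lemma sender_eq:
  assumes s: "\<sigma> \<in> sender_strats n k"
  shows "sender_val \<mu> uS (\<lambda>_. q) n k \<sigma> \<tau> = (\<Sum>ys\<in>words k. prod_prior q ys * EE \<mu> n uS (\<tau> ys))"
proof -
  have "sender_val \<mu> uS (\<lambda>_. q) n k \<sigma> \<tau>
     = (\<Sum>ws\<in>words n. \<Sum>ys\<in>words k. prod_prior \<mu> ws * prod_prior q ys * avg_payoff uS ws (\<tau> ys) * (\<Sum>xs\<in>words k. \<sigma> ws xs))"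
    unfolding sender_val_def
    apply (intro sum.cong refl)
    apply (subst sum.swap)
    apply (intro sum.cong refl)
    apply (simp add: sum_distrib_left)
    apply (intro sum.cong refl)
    apply (auto simp: chan_const words_def algebra_simps)
    done
  also have "\<dots> = (\<Sum>ws\<in>words n. \<Sum>ys\<in>words k. prod_prior q ys * (prod_prior \<mu> ws * avg_payoff uS ws (\<tau> ys)))"
    using s unfolding sender_strats_def is_dist_on_def by (intro sum.cong refl) auto
  also have "\<dots> = (\<Sum>ys\<in>words k. prod_prior q ys * EE \<mu> n uS (\<tau> ys))"
    unfolding EE_def by (simp add: sum.swap[of _ "words n"] sum_distrib_left)
  finally show ?thesis .
qed



lemma A_star_eu: "A_star uR \<nu> = {a. \<forall>b. eu \<nu> uR b \<le> eu \<nu> uR a}"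
  unfolding A_star_def eu_def by simp

lemma u_star_eu: "u_star_S uS uR \<nu> = Min (eu \<nu> uS ` A_star uR \<nu>)"
  unfolding u_star_S_def eu_def by simp

lemma A_star_ne: "A_star uR (\<nu> :: 'w::finite \<Rightarrow> real) \<noteq> ({} :: ('a::finite) set)"
proof -
  have "Max (range (eu \<nu> uR)) \<in> range (eu \<nu> uR)" by (rule Max_in) auto
  then obtain a0 where a0: "eu \<nu> uR a0 = Max (range (eu \<nu> uR))" by (metis rangeE)
  have "\<forall>b. eu \<nu> uR b \<le> eu \<nu> uR a0" using a0 by simp
  then show ?thesis unfolding A_star_eu by blast
qed

lemma u_star_le: "a \<in> A_star uR \<nu> \<Longrightarrow> u_star_S uS uR \<nu> \<le> eu \<nu> uS a"
  unfolding u_star_eu by (intro Min_le) auto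

lemma u_star_attained: "\<exists>a0 \<in> A_star uR \<nu>. eu \<nu> uS a0 = u_star_S uS uR (\<nu> :: 'w::finite \<Rightarrow> real)"
proof -
  have "u_star_S uS uR \<nu> \<in> eu \<nu> uS ` A_star uR \<nu>"
    unfolding u_star_eu using A_star_ne[of uR \<nu>] by (intro Min_in) auto
  then show ?thesis by force
qed

lemma BR_in_Astar:
  assumes md: "is_dist \<mu>" and s: "\<sigma> \<in> sender_strats n k"
    and \<tau>: "\<tau> \<in> BR \<mu> uR (\<lambda>_. q) n k \<sigma>" and ys: "ys \<in> words k" and pos: "0 < prod_prior q ys"
    and t: "t < n"
  shows "\<tau> ys ! t \<in> A_star uR \<mu>"
proof (rule ccontr)
  assume "\<tau> ys ! t \<notin> A_star uR \<mu>"
  then obtain b where b: "eu \<mu> uR (\<tau> ys ! t) < eu \<mu> uR b" unfolding A_star_eu by (auto simp: not_le)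
  let ?as = "\<tau> ys"
  let ?as' = "(\<tau> ys)[t := b]"
  have asw: "?as \<in> words n" using \<tau> ys unfolding BR_def by auto
  then have asw': "?as' \<in> words n" unfolding words_def by simp
  have le: "recv_val \<mu> uR (\<lambda>_. q) n k \<sigma> ys ?as' \<le> recv_val \<mu> uR (\<lambda>_. q) n k \<sigma> ys ?as"
    using \<tau> ys asw' unfolding BR_def by auto
  have fin: "finite {..<n}" by simp
  have "(\<Sum>i<n. eu \<mu> uR (?as' ! i)) = eu \<mu> uR b + (\<Sum>i\<in>{..<n} - {t}. eu \<mu> uR (?as' ! i))"
    using t by (subst sum.remove[OF fin, of t]) (use asw in \<open>auto simp: words_def\<close>)
  also have "(\<Sum>i\<in>{..<n} - {t}. eu \<mu> uR (?as' ! i)) = (\<Sum>i\<in>{..<n} - {t}. eu \<mu> uR (?as ! i))"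
    by (intro sum.cong) auto
  also have "eu \<mu> uR b + \<dots> > eu \<mu> uR (?as ! t) + (\<Sum>i\<in>{..<n} - {t}. eu \<mu> uR (?as ! i))"
    using b by simp
  also have "eu \<mu> uR (?as ! t) + (\<Sum>i\<in>{..<n} - {t}. eu \<mu> uR (?as ! i)) = (\<Sum>i<n. eu \<mu> uR (?as ! i))"
    using t by (subst sum.remove[OF fin, of t]) auto
  finally have gt: "(\<Sum>i<n. eu \<mu> uR (?as ! i)) < (\<Sum>i<n. eu \<mu> uR (?as' ! i))" .
  have n0: "0 < n" using t by simp
  have "EE \<mu> n uR ?as < EE \<mu> n uR ?as'"
    unfolding EE_decomp[OF md] using gt n0 by (intro mult_strict_left_mono) auto
  then have "recv_val \<mu> uR (\<lambda>_. q) n k \<sigma> ys ?as < recv_val \<mu> uR (\<lambda>_. q) n k \<sigma> ys ?as'"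
    unfolding recv_eq[OF s ys] using pos by (intro mult_strict_left_mono) auto
  then show False using le by simp
qed

lemma INF_eq:
  fixes q :: "'y::finite \<Rightarrow> real" and \<mu> :: "'w::finite \<Rightarrow> real" and uR uS :: "'w \<Rightarrow> 'a::finite \<Rightarrow> real"
  assumes md: "is_dist \<mu>" and qd: "is_dist q" and s: "\<sigma> \<in> sender_strats n k" and n0: "0 < n"
  shows "(INF \<tau>\<in>BR \<mu> uR (\<lambda>_. q) n k \<sigma>. sender_val \<mu> uS (\<lambda>_. q) n k \<sigma> \<tau>) = u_star_S uS uR \<mu>"
proof -
  let ?u = "u_star_S uS uR \<mu>"
  have q0: "\<forall>s. 0 \<le> q s" using qd unfolding is_dist_def by auto
  have qs1: "(\<Sum>ys\<in>words k. prod_prior q ys) = 1" using prod_sum1[OF qd] .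
  obtain a0 where a0: "a0 \<in> A_star uR \<mu>" "eu \<mu> uS a0 = ?u" using u_star_attained by blast
  define \<tau>0 where "\<tau>0 ys = replicate n a0" for ys :: "'y list"
  have EE0: "EE \<mu> n u (replicate n a0) = eu \<mu> u a0" for u
    unfolding EE_decomp[OF md] using n0 by simp
  have \<tau>0BR: "\<tau>0 \<in> BR \<mu> uR (\<lambda>_. q) n k \<sigma>"
    unfolding BR_def
  proof (intro CollectI ballI conjI)
    fix ys :: "'y list" assume ys: "ys \<in> words k"
    show "\<tau>0 ys \<in> words n" unfolding \<tau>0_def words_def by simp
    fix as :: "'a list" assume as: "as \<in> words n"
    have "EE \<mu> n uR as \<le> EE \<mu> n uR (\<tau>0 ys)"
    proof -
      have "(\<Sum>t<n. eu \<mu> uR (as ! t)) \<le> (\<Sum>t<n. eu \<mu> uR a0)"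
        using a0(1) unfolding A_star_eu by (intro sum_mono) auto
      then have "EE \<mu> n uR as \<le> (1 / real n) * (\<Sum>t<n. eu \<mu> uR a0)"
        unfolding EE_decomp[OF md] by (intro mult_left_mono) auto
      also have "\<dots> = EE \<mu> n uR (\<tau>0 ys)" unfolding \<tau>0_def EE0 using n0 by simp
      finally show ?thesis .
    qed
    then show "recv_val \<mu> uR (\<lambda>_. q) n k \<sigma> ys as \<le> recv_val \<mu> uR (\<lambda>_. q) n k \<sigma> ys (\<tau>0 ys)"
      unfolding recv_eq[OF s ys] using prod_prior_nonneg[OF q0] by (intro mult_left_mono) auto
  qed
  have v0: "sender_val \<mu> uS (\<lambda>_. q) n k \<sigma> \<tau>0 = ?u"
    unfolding sender_eq[OF s] \<tau>0_def EE0 a0(2) using qs1 by (simp add: sum_distrib_right[symmetric])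
  have lb: "?u \<le> sender_val \<mu> uS (\<lambda>_. q) n k \<sigma> \<tau>" if \<tau>: "\<tau> \<in> BR \<mu> uR (\<lambda>_. q) n k \<sigma>" for \<tau>
  proof -
    have "(\<Sum>ys\<in>words k. prod_prior q ys * ?u) \<le> (\<Sum>ys\<in>words k. prod_prior q ys * EE \<mu> n uS (\<tau> ys))"
    proof (intro sum_mono)
      fix ys :: "'y list" assume ys: "ys \<in> words k"
      show "prod_prior q ys * ?u \<le> prod_prior q ys * EE \<mu> n uS (\<tau> ys)"
      proof (cases "prod_prior q ys = 0")
        case False
        then have pos: "0 < prod_prior q ys" using prod_prior_nonneg[OF q0, of ys] by simp
        have "(\<Sum>t<n. ?u) \<le> (\<Sum>t<n. eu \<mu> uS (\<tau> ys ! t))"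
          using BR_in_Astar[OF md s \<tau> ys pos] by (intro sum_mono u_star_le) auto
        then have "(1 / real n) * (\<Sum>t<n. ?u) \<le> EE \<mu> n uS (\<tau> ys)"
          unfolding EE_decomp[OF md] by (intro mult_left_mono) auto
        then have "?u \<le> EE \<mu> n uS (\<tau> ys)" using n0 by simp
        then show ?thesis using pos by (intro mult_left_mono) auto
      qed simp
    qed
    then show ?thesis unfolding sender_eq[OF s] using qs1 by (simp add: sum_distrib_right[symmetric])
  qed
  show ?thesis
  proof (rule cInf_eq_minimum)
    show "?u \<in> sender_val \<mu> uS (\<lambda>_. q) n k \<sigma> ` BR \<mu> uR (\<lambda>_. q) n k \<sigma>"
      using \<tau>0BR v0 by (metis image_eqI)
  qed (use lb in auto)
qed

lemma U_star_const:
  fixes \<mu> :: "'w::finite \<Rightarrow> real"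
  assumes md: "is_dist \<mu>" and qd: "is_dist q" and n0: "0 < n"
  shows "U_star \<mu> uS uR (\<lambda>(_::'x::finite). q) n k = u_star_S uS uR \<mu>"
proof -
  define \<sigma>0 :: "'w list \<Rightarrow> 'x list \<Rightarrow> real" where
    "\<sigma>0 ws xs = (if xs = replicate k undefined then 1 else 0)" for ws xs
  have "\<sigma>0 \<in> sender_strats n k"
    unfolding sender_strats_def is_dist_on_def \<sigma>0_def
    using finite_words[of k, where 'a='x] by (auto simp: words_def)
  then have ne: "sender_strats n k \<noteq> ({} :: ('w list \<Rightarrow> 'x list \<Rightarrow> real) set)" by blast
  have "U_star \<mu> uS uR (\<lambda>(_::'x). q) n k = (SUP \<sigma>\<in>(sender_strats n k :: ('w list \<Rightarrow> 'x list \<Rightarrow> real) set). u_star_S uS uR \<mu>)"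
    unfolding U_star_def by (simp add: INF_eq[OF md qd _ n0])
  also have "\<dots> = u_star_S uS uR \<mu>" using ne by simp
  finally show ?thesis .
qed


theorem lemma2:
  fixes \<mu> :: "'w::finite \<Rightarrow> real"
    and uS uR :: "'w \<Rightarrow> 'a::finite \<Rightarrow> real"
    and Q :: "'x::finite \<Rightarrow> 'y::finite \<Rightarrow> real"
    and n k :: nat
  assumes "is_dist \<mu>"
    and "\<forall>x. is_dist (Q x)"
    and "capacity Q = 0"
    and "0 < n" and "0 < k"
  shows "U_star \<mu> uS uR Q n k = V uS uR \<mu> (real k / real n * capacity Q)
       \<and> V uS uR \<mu> (real k / real n * capacity Q) = u_star_S uS uR \<mu>"
proof -
  obtain q where qd: "is_dist q" and Qq: "\<forall>x. Q x = q"
    using capacity_zero_const[OF assms(2,3)] by blast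
  have QQ: "Q = (\<lambda>_. q)" using Qq by auto
  have c0: "real k / real n * capacity Q = 0" using assms(3) by simp
  have Vv: "V uS uR \<mu> (real k / real n * capacity Q) = u_star_S uS uR \<mu>"
    unfolding c0 by (rule V_zero[OF assms(1)])
  have Uu: "U_star \<mu> uS uR Q n k = u_star_S uS uR \<mu>"
    unfolding QQ by (rule U_star_const[OF assms(1) qd assms(4)])
  show ?thesis using Uu Vv by simp
qed

end
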